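(* There exists a non-commutative bilinear algorithm that multiplies two $9\times 9$ matrices using $\langle 6,6,6\rangle+3\,\langle 6,6,3\rangle+3\,\langle 6,3,3\rangle$ multiplications. In particular, $$\langle 9,9,9\rangle\leq\langle 6,6,6\rangle+3\,\langle 6,6,3\rangle+3\,\langle 6,3,3\rangle .$$
   Context: Fix a field $\mathbb{K}$. A non-commutative bilinear algorithm for multiplying an $a\times b$ matrix $A$ by a $b\times c$ matrix $B$ using $r$ multiplications consists of $r$ products $t_k=\big(\sum_{i,j}\alpha^{(k)}_{ij}a_{ij}\big)\big(\sum_{j,l}\beta^{(k)}_{jl}b_{jl}\big)$ with scalars in $\mathbb{K}$, together with scalars $\gamma^{(k)}_{il}\in\mathbb{K}$ such that $(AB)_{il}=\sum_k\gamma^{(k)}_{il}t_k$ for all $i,l$. This identity must hold when the entries lie in an arbitrary, not necessarily commutative, associative $\mathbb{K}$-algebra. The quantity $\langle a,b,c\rangle$ denotes the minimal such $r$, i.e. the tensor rank of the matrix multiplication tensor of format $(a,b,c)$. *)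

theory Defs
  imports Main
begin

text \<open>A non-commutative bilinear algorithm for multiplying an a x b matrix by a b x c matrix
  with r multiplications, over the field 'k.  Indices are 0-based.
  alpha k i j : coefficient of A(i,j) in the left factor of product k;
  beta k j l  : coefficient of B(j,l) in the right factor of product k;
  gamma k i l : coefficient of product k in the output entry (AB)(i,l).
  The identity holds over every (possibly non-commutative) associative algebra iff the
  coefficient of each monomial A(i,j) B(j',l) in the output entry (i',l') is correct,
  i.e. iff the following tensor identity holds.\<close>
definition mm_alg ::
  "nat \<Rightarrow> nat \<Rightarrow> nat \<Rightarrow> nat \<Rightarrow> (nat \<Rightarrow> nat \<Rightarrow> nat \<Rightarrow> 'k::field)
     \<Rightarrow> (nat \<Rightarrow> nat \<Rightarrow> nat \<Rightarrow> 'k) \<Rightarrow> (nat \<Rightarrow> nat \<Rightarrow> nat \<Rightarrow> 'k) \<Rightarrow> bool" where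
  "mm_alg a b c r alpha beta gamma \<longleftrightarrow>
     (\<forall>i<a. \<forall>j<b. \<forall>j'<b. \<forall>l<c. \<forall>i'<a. \<forall>l'<c.
        (\<Sum>k<r. alpha k i j * beta k j' l * gamma k i' l') =
        (if i = i' \<and> j = j' \<and> l = l' then 1 else 0))"

definition mm_rank :: "'k::field itself \<Rightarrow> nat \<Rightarrow> nat \<Rightarrow> nat \<Rightarrow> nat" where
  "mm_rank _ a b c =
     (LEAST r. \<exists>(alpha :: nat \<Rightarrow> nat \<Rightarrow> nat \<Rightarrow> 'k) beta gamma. mm_alg a b c r alpha beta gamma)"

end

theory Submission
  imports Defs
begin

definition cat :: "nat \<Rightarrow> (nat \<Rightarrow> 'a) \<Rightarrow> (nat \<Rightarrow> 'a) \<Rightarrow> nat \<Rightarrow> 'a" where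
  "cat r f g = (\<lambda>p. if p < r then f p else g (p - r))"

lemma sum_split: "(\<Sum>p<m+n. f p) = (\<Sum>p<m. f p) + (\<Sum>p<n. f (m+p))" for m n :: nat
  by (induction n) (auto simp: add.assoc)

lemma sum_cat:
  "(\<Sum>p<r1+r2. cat r1 a1 a2 p x y * cat r1 b1 b2 p y' z * cat r1 c1 c2 p x' z')
   = (\<Sum>p<r1. a1 p x y * b1 p y' z * c1 p x' z') + (\<Sum>p<r2. a2 p x y * b2 p y' z * c2 p x' z')"
  by (simp add: sum_split cat_def)

lemma mm_alg_cyc:
  assumes "mm_alg a b c r al be ga"
  shows "mm_alg b c a r be (\<lambda>k l i. ga k i l) (\<lambda>k j i. al k i j)"
  unfolding mm_alg_def
proof (intro allI impI)
  fix i j j' l i' l'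
  assume h: "i < b" "j < c" "j' < c" "l < a" "i' < b" "l' < a"
  have "(\<Sum>k<r. be k i j * ga k l j' * al k l' i') = (\<Sum>k<r. al k l' i' * be k i j * ga k l j')"
    by (simp add: mult_ac)
  also have "\<dots> = (if l' = l \<and> i' = i \<and> j = j' then 1 else 0)"
    using assms h unfolding mm_alg_def by auto
  finally show "(\<Sum>k<r. be k i j * ga k l j' * al k l' i') = (if i = i' \<and> j = j' \<and> l = l' then 1 else 0)"
    by auto
qed

lemma div_decomp:
  fixes k b c i j l :: nat
  assumes "j < b" "l < c"
  shows "(k div (b*c) = i \<and> k div c mod b = j \<and> k mod c = l) \<longleftrightarrow> k = (i*b+j)*c+l"
proof
  assume h: "k div (b*c) = i \<and> k div c mod b = j \<and> k mod c = l"
  have 1: "k = k div c * c + k mod c" by simp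
  have 2: "k div c = k div c div b * b + k div c mod b" by simp
  have 3: "k div c div b = k div (b*c)" by (metis div_mult2_eq mult.commute)
  have "k = (k div c div b * b + k div c mod b) * c + k mod c" using 1 2 by simp
  also have "\<dots> = (i*b+j)*c+l" using 3 h by simp
  finally show "k = (i*b+j)*c+l" .
next
  assume h: "k = (i*b+j)*c+l"
  have c: "k div c = i*b+j" using h assms by simp
  have "k div (b*c) = k div c div b" by (metis div_mult2_eq mult.commute)
  then show "k div (b*c) = i \<and> k div c mod b = j \<and> k mod c = l"
    using c h assms by simp
qed

lemma triv_alg:
  assumes "0 < b" "0 < c"
  shows "mm_alg a b c (a*b*c)
    (\<lambda>k i j. if k div (b*c) = i \<and> k div c mod b = j then 1 else (0::'k::field))
    (\<lambda>k j l. if k div c mod b = j \<and> k mod c = l then 1 else 0)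
    (\<lambda>k i l. if k div (b*c) = i \<and> k mod c = l then 1 else 0)"
  unfolding mm_alg_def
proof (intro allI impI)
  fix i j j' l i' l'
  assume h: "i < a" "j < b" "j' < b" "l < c" "i' < a" "l' < c"
  have e: "\<And>k. (if k div (b*c) = i \<and> k div c mod b = j then 1 else (0::'k)) *
        (if k div c mod b = j' \<and> k mod c = l then 1 else 0) *
        (if k div (b*c) = i' \<and> k mod c = l' then 1 else 0)
      = (if i = i' \<and> j = j' \<and> l = l' then (if k = (i*b+j)*c+l then 1 else 0) else 0)"
  proof -
    fix k
    have eq: "((k div (b*c) = i \<and> k div c mod b = j) \<and> (k div c mod b = j' \<and> k mod c = l)
        \<and> (k div (b*c) = i' \<and> k mod c = l')) \<longleftrightarrow>
       ((i = i' \<and> j = j' \<and> l = l') \<and> (k div (b*c) = i \<and> k div c mod b = j \<and> k mod c = l))"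
      by blast
    have "(if k div (b*c) = i \<and> k div c mod b = j then 1 else (0::'k)) *
        (if k div c mod b = j' \<and> k mod c = l then 1 else 0) *
        (if k div (b*c) = i' \<and> k mod c = l' then 1 else 0)
      = (if ((k div (b*c) = i \<and> k div c mod b = j) \<and> (k div c mod b = j' \<and> k mod c = l)
        \<and> (k div (b*c) = i' \<and> k mod c = l')) then 1 else 0)" by simp
    also have "\<dots> = (if (i = i' \<and> j = j' \<and> l = l') \<and> k = (i*b+j)*c+l then 1 else 0)"
      by (simp only: eq div_decomp[OF h(2) h(4)])
    finally show "?thesis k" by simp
  qed
  have lt: "(i*b+j)*c+l < a*b*c"
  proof -
    have "Suc i * b \<le> a * b" using h by (intro mult_le_mono1) simp
    hence "i*b+j < a*b" using h by simp
    hence "i*b+j+1 \<le> a*b" by simp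
    hence "(i*b+j+1)*c \<le> a*b*c" by (rule mult_le_mono1)
    thus ?thesis using h by (simp add: algebra_simps)
  qed
  show "(\<Sum>k<a*b*c. (if k div (b*c) = i \<and> k div c mod b = j then 1 else (0::'k)) *
        (if k div c mod b = j' \<and> k mod c = l then 1 else 0) *
        (if k div (b*c) = i' \<and> k mod c = l' then 1 else 0)) =
       (if i = i' \<and> j = j' \<and> l = l' then 1 else 0)"
    using lt by (simp only: e) (cases "i = i' \<and> j = j' \<and> l = l'"; simp only: if_True if_False sum.neutral_const; simp)
qed

lemma rank_alg:
  assumes "0 < b" "0 < c"
  shows "\<exists>al be ga. mm_alg a b c (mm_rank TYPE('k::field) a b c) (al::nat\<Rightarrow>nat\<Rightarrow>nat\<Rightarrow>'k) be ga"
  unfolding mm_rank_def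
  by (rule LeastI_ex) (use triv_alg[OF assms, where 'k='k] in blast)

lemma rank_le:
  assumes "mm_alg a b c r (al::nat\<Rightarrow>nat\<Rightarrow>nat\<Rightarrow>'k::field) be ga"
  shows "mm_rank TYPE('k) a b c \<le> r"
  unfolding mm_rank_def by (rule Least_le) (use assms in blast)

definition blk :: "nat \<Rightarrow> bool" where "blk x = (6 \<le> x)"
definition off :: "nat \<Rightarrow> nat" where "off x = (if x < 6 then x else x - 6)"

definition lift :: "(bool \<Rightarrow> bool \<Rightarrow> 'k::field) \<Rightarrow> nat \<Rightarrow> nat \<Rightarrow> (nat \<Rightarrow> nat \<Rightarrow> nat \<Rightarrow> 'k)
    \<Rightarrow> nat \<Rightarrow> nat \<Rightarrow> nat \<Rightarrow> 'k" where
  "lift u m n f = (\<lambda>k x y. if off x < m \<and> off y < n then u (blk x) (blk y) * f k (off x) (off y) else 0)"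

lemma block:
  assumes "mm_alg P Q T r al be ga"
  shows "(\<Sum>k<r. lift u P Q al k x y * lift v Q T be k y' z * lift w P T ga k x' z') =
    (if off x < P \<and> off y < Q \<and> off y' < Q \<and> off z < T \<and> off x' < P \<and> off z' < T
     then u (blk x) (blk y) * v (blk y') (blk z) * w (blk x') (blk z') *
       (if off x = off x' \<and> off y = off y' \<and> off z = off z' then 1 else 0) else 0)"
proof (cases "off x < P \<and> off y < Q \<and> off y' < Q \<and> off z < T \<and> off x' < P \<and> off z' < T")
  case True
  have "(\<Sum>k<r. lift u P Q al k x y * lift v Q T be k y' z * lift w P T ga k x' z') =
     (\<Sum>k<r. (u (blk x) (blk y) * v (blk y') (blk z) * w (blk x') (blk z')) *
        (al k (off x) (off y) * be k (off y') (off z) * ga k (off x') (off z')))"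
    using True by (intro sum.cong) (auto simp: lift_def mult_ac)
  also have "\<dots> = (u (blk x) (blk y) * v (blk y') (blk z) * w (blk x') (blk z')) *
     (\<Sum>k<r. al k (off x) (off y) * be k (off y') (off z) * ga k (off x') (off z'))"
    by (simp add: sum_distrib_left)
  also have "(\<Sum>k<r. al k (off x) (off y) * be k (off y') (off z) * ga k (off x') (off z'))
     = (if off x = off x' \<and> off y = off y' \<and> off z = off z' then 1 else 0)"
    using assms True unfolding mm_alg_def by auto
  finally show ?thesis using True by simp
next
  case False
  then show ?thesis by (auto simp: lift_def intro!: sum.neutral)
qed

definition mk :: "'k \<Rightarrow> 'k \<Rightarrow> 'k \<Rightarrow> 'k \<Rightarrow> bool \<Rightarrow> bool \<Rightarrow> 'k::field" where
  "mk a b c d i j = (if i then (if j then d else c) else (if j then b else a))"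

lemma core2:
  fixes bx by1 by2 bz bx2 bz2 :: bool and X Y Z :: nat
  assumes "X < 6" "Y < 6" "Z < 6" "bx \<longrightarrow> X < 3" "bx2 \<longrightarrow> X < 3" "by1 \<longrightarrow> Y < 3"
    "by2 \<longrightarrow> Y < 3" "bz \<longrightarrow> Z < 3" "bz2 \<longrightarrow> Z < 3"
  shows "(if X < 6 \<and> Y < 6 \<and> Y < 6 \<and> Z < 6 \<and> X < 6 \<and> Z < 6 then (mk 1 0 0 1) (bx) (by1) * (mk 1 0 0 1) (by2) (bz) * (mk 1 0 0 1) (bx2) (bz2) * (if X = X \<and> Y = Y \<and> Z = Z then 1 else 0) else 0)
   + ((if X < 6 \<and> Y < 6 \<and> Y < 6 \<and> Z < 3 \<and> X < 6 \<and> Z < 3 then (mk 1 0 0 0) (bx) (by1) * (mk 0 (-1) 0 1) (by2) (bz) * (mk 0 (-1) 0 (-1)) (bx2) (bz2) * (if X = X \<and> Y = Y \<and> Z = Z then 1 else 0) else 0)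
   + ((if X < 6 \<and> Y < 3 \<and> Y < 3 \<and> Z < 6 \<and> X < 6 \<and> Z < 6 then (mk 0 (-1) 0 1) (bx) (by1) * (mk 0 0 (-1) (-1)) (by2) (bz) * (mk 1 0 0 0) (bx2) (bz2) * (if X = X \<and> Y = Y \<and> Z = Z then 1 else 0) else 0)
   + ((if X < 3 \<and> Y < 6 \<and> Y < 6 \<and> Z < 6 \<and> X < 3 \<and> Z < 6 then (mk 0 0 (-1) (-1)) (bx) (by1) * (mk 1 0 0 0) (by2) (bz) * (mk 0 0 (-1) 1) (bx2) (bz2) * (if X = X \<and> Y = Y \<and> Z = Z then 1 else 0) else 0)
   + ((if X < 6 \<and> Y < 3 \<and> Y < 3 \<and> Z < 3 \<and> X < 6 \<and> Z < 3 then (mk 1 1 0 0) (bx) (by1) * (mk 0 0 0 (-1)) (by2) (bz) * (mk 1 (-1) 0 0) (bx2) (bz2) * (if X = X \<and> Y = Y \<and> Z = Z then 1 else 0) else 0)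
   + ((if X < 3 \<and> Y < 3 \<and> Y < 3 \<and> Z < 6 \<and> X < 3 \<and> Z < 6 then (mk 0 0 0 (-1)) (bx) (by1) * (mk 1 0 (-1) 0) (by2) (bz) * (mk 1 0 1 0) (bx2) (bz2) * (if X = X \<and> Y = Y \<and> Z = Z then 1 else 0) else 0)
   + ((if X < 3 \<and> Y < 6 \<and> Y < 6 \<and> Z < 3 \<and> X < 3 \<and> Z < 3 then (mk 1 0 (-1) 0) (bx) (by1) * (mk 1 1 0 0) (by2) (bz) * (mk 0 0 0 (-1)) (bx2) (bz2) * (if X = X \<and> Y = Y \<and> Z = Z then 1 else 0) else 0)))))))
   = (if bx = bx2 \<and> by1 = by2 \<and> bz = bz2 then 1 else (0::'k::field))"
  using assms
  by (cases bx; cases by1; cases by2; cases bz; cases bx2; cases bz2; cases "X < 3"; cases "Y < 3"; cases "Z < 3";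
      simp add: mk_def)

lemma off_lt6: "x < 9 \<Longrightarrow> off x < 6" by (auto simp: off_def)
lemma blk_off: "x < 9 \<Longrightarrow> blk x \<Longrightarrow> off x < 3" by (auto simp: off_def blk_def)
lemma eq_blk: "off x = off x' \<Longrightarrow> (x = x') = (blk x = blk x')"
  by (auto simp: off_def blk_def split: if_splits)

lemma final:
  assumes h: "x < 9" "y < 9" "y' < 9" "z < 9" "x' < 9" "z' < 9"
  shows "(if off x < 6 \<and> off y < 6 \<and> off y' < 6 \<and> off z < 6 \<and> off x' < 6 \<and> off z' < 6 then (mk 1 0 0 1) (blk x) (blk y) * (mk 1 0 0 1) (blk y') (blk z) * (mk 1 0 0 1) (blk x') (blk z') * (if off x = off x' \<and> off y = off y' \<and> off z = off z' then 1 else 0) else 0)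
   + ((if off x < 6 \<and> off y < 6 \<and> off y' < 6 \<and> off z < 3 \<and> off x' < 6 \<and> off z' < 3 then (mk 1 0 0 0) (blk x) (blk y) * (mk 0 (-1) 0 1) (blk y') (blk z) * (mk 0 (-1) 0 (-1)) (blk x') (blk z') * (if off x = off x' \<and> off y = off y' \<and> off z = off z' then 1 else 0) else 0)
   + ((if off x < 6 \<and> off y < 3 \<and> off y' < 3 \<and> off z < 6 \<and> off x' < 6 \<and> off z' < 6 then (mk 0 (-1) 0 1) (blk x) (blk y) * (mk 0 0 (-1) (-1)) (blk y') (blk z) * (mk 1 0 0 0) (blk x') (blk z') * (if off x = off x' \<and> off y = off y' \<and> off z = off z' then 1 else 0) else 0)
   + ((if off x < 3 \<and> off y < 6 \<and> off y' < 6 \<and> off z < 6 \<and> off x' < 3 \<and> off z' < 6 then (mk 0 0 (-1) (-1)) (blk x) (blk y) * (mk 1 0 0 0) (blk y') (blk z) * (mk 0 0 (-1) 1) (blk x') (blk z') * (if off x = off x' \<and> off y = off y' \<and> off z = off z' then 1 else 0) else 0)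
   + ((if off x < 6 \<and> off y < 3 \<and> off y' < 3 \<and> off z < 3 \<and> off x' < 6 \<and> off z' < 3 then (mk 1 1 0 0) (blk x) (blk y) * (mk 0 0 0 (-1)) (blk y') (blk z) * (mk 1 (-1) 0 0) (blk x') (blk z') * (if off x = off x' \<and> off y = off y' \<and> off z = off z' then 1 else 0) else 0)
   + ((if off x < 3 \<and> off y < 3 \<and> off y' < 3 \<and> off z < 6 \<and> off x' < 3 \<and> off z' < 6 then (mk 0 0 0 (-1)) (blk x) (blk y) * (mk 1 0 (-1) 0) (blk y') (blk z) * (mk 1 0 1 0) (blk x') (blk z') * (if off x = off x' \<and> off y = off y' \<and> off z = off z' then 1 else 0) else 0)
   + ((if off x < 3 \<and> off y < 6 \<and> off y' < 6 \<and> off z < 3 \<and> off x' < 3 \<and> off z' < 3 then (mk 1 0 (-1) 0) (blk x) (blk y) * (mk 1 1 0 0) (blk y') (blk z) * (mk 0 0 0 (-1)) (blk x') (blk z') * (if off x = off x' \<and> off y = off y' \<and> off z = off z' then 1 else 0) else 0)))))))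
   = (if x = x' \<and> y = y' \<and> z = z' then 1 else (0::'k::field))"
proof (cases "off x = off x' \<and> off y = off y' \<and> off z = off z'")
  case False
  then have n: "\<not> (x = x' \<and> y = y' \<and> z = z')" by auto
  show ?thesis by (simp only: if_not_P[OF False] if_not_P[OF n] mult_zero_right if_cancel add_0_right)
next
  case True
  then have ox: "off x' = off x" and oy: "off y' = off y" and oz: "off z' = off z" by auto
  have e1: "(x = x') = (blk x = blk x')" using ox by (intro eq_blk) simp
  have e2: "(y = y') = (blk y = blk y')" using oy by (intro eq_blk) simp
  have e3: "(z = z') = (blk z = blk z')" using oz by (intro eq_blk) simp
  have C: "?thesis" if "off x' = off x" "off y' = off y" "off z' = off z"
    unfolding that e1 e2 e3
    by (rule core2) (use h blk_off off_lt6 ox oy oz in metis)+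
  show ?thesis using C ox oy oz by blast
qed

theorem lemma2:
  "(\<exists>(alpha :: nat \<Rightarrow> nat \<Rightarrow> nat \<Rightarrow> 'k::field) beta gamma.
      mm_alg 9 9 9
        (mm_rank TYPE('k) 6 6 6 + 3 * mm_rank TYPE('k) 6 6 3 + 3 * mm_rank TYPE('k) 6 3 3)
        alpha beta gamma)
   \<and> mm_rank TYPE('k) 9 9 9
       \<le> mm_rank TYPE('k) 6 6 6 + 3 * mm_rank TYPE('k) 6 6 3 + 3 * mm_rank TYPE('k) 6 3 3"
proof -
  define R0 where "R0 = mm_rank TYPE('k) 6 6 6"
  define R1 where "R1 = mm_rank TYPE('k) 6 6 3"
  define R2 where "R2 = mm_rank TYPE('k) 6 3 3"
  obtain a0 b0 c0 where A0: "mm_alg 6 6 6 R0 (a0::nat\<Rightarrow>nat\<Rightarrow>nat\<Rightarrow>'k) b0 c0"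
    using rank_alg[of 6 6 6, where 'k='k] unfolding R0_def by auto
  obtain a4 b4 c4 where A4: "mm_alg 6 6 3 R1 (a4::nat\<Rightarrow>nat\<Rightarrow>nat\<Rightarrow>'k) b4 c4"
    using rank_alg[of 6 3 6, where 'k='k] unfolding R1_def by auto
  obtain a3 b3 c3 where A3: "mm_alg 6 3 6 R1 (a3::nat\<Rightarrow>nat\<Rightarrow>nat\<Rightarrow>'k) b3 c3"
    using mm_alg_cyc[OF A4] by blast
  obtain a5 b5 c5 where A5: "mm_alg 3 6 6 R1 (a5::nat\<Rightarrow>nat\<Rightarrow>nat\<Rightarrow>'k) b5 c5"
    using mm_alg_cyc[OF A3] by blast
  obtain a2 b2 c2 where A2: "mm_alg 6 3 3 R2 (a2::nat\<Rightarrow>nat\<Rightarrow>nat\<Rightarrow>'k) b2 c2"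
    using rank_alg[of 3 3 6, where 'k='k] unfolding R2_def by auto
  obtain a6 b6 c6 where A6: "mm_alg 3 3 6 R2 (a6::nat\<Rightarrow>nat\<Rightarrow>nat\<Rightarrow>'k) b6 c6"
    using mm_alg_cyc[OF A2] by blast
  obtain a1 b1 c1 where A1: "mm_alg 3 6 3 R2 (a1::nat\<Rightarrow>nat\<Rightarrow>nat\<Rightarrow>'k) b1 c1"
    using mm_alg_cyc[OF A6] by blast
  define al where "al = cat R0 (lift (mk 1 0 0 1) 6 6 a0) (cat R1 (lift (mk 1 0 0 0) 6 6 a4)
    (cat R1 (lift (mk 0 (-1) 0 1) 6 3 a3) (cat R1 (lift (mk 0 0 (-1) (-1)) 3 6 a5)
    (cat R2 (lift (mk 1 1 0 0) 6 3 a2) (cat R2 (lift (mk 0 0 0 (-1)) 3 3 a6)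
    (lift (mk 1 0 (-1) 0) 3 6 a1))))))"
  define be where "be = cat R0 (lift (mk 1 0 0 1) 6 6 b0) (cat R1 (lift (mk 0 (-1) 0 1) 6 3 b4)
    (cat R1 (lift (mk 0 0 (-1) (-1)) 3 6 b3) (cat R1 (lift (mk 1 0 0 0) 6 6 b5)
    (cat R2 (lift (mk 0 0 0 (-1)) 3 3 b2) (cat R2 (lift (mk 1 0 (-1) 0) 3 6 b6)
    (lift (mk 1 1 0 0) 6 3 b1))))))"
  define ga where "ga = cat R0 (lift (mk 1 0 0 1) 6 6 c0) (cat R1 (lift (mk 0 (-1) 0 (-1)) 6 3 c4)
    (cat R1 (lift (mk 1 0 0 0) 6 6 c3) (cat R1 (lift (mk 0 0 (-1) 1) 3 6 c5)
    (cat R2 (lift (mk 1 (-1) 0 0) 6 3 c2) (cat R2 (lift (mk 1 0 1 0) 3 6 c6)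
    (lift (mk 0 0 0 (-1)) 3 3 c1))))))"
  have alg: "mm_alg 9 9 9 (R0 + (R1 + (R1 + (R1 + (R2 + (R2 + R2)))))) al be ga"
    unfolding mm_alg_def al_def be_def ga_def
    apply (intro allI impI)
    apply (simp only: sum_cat block[OF A0] block[OF A4] block[OF A3] block[OF A5]
        block[OF A2] block[OF A6] block[OF A1])
    apply (rule final)
    apply assumption+
    done
  have n: "R0 + (R1 + (R1 + (R1 + (R2 + (R2 + R2))))) = R0 + 3 * R1 + 3 * R2" by simp
  have alg': "mm_alg 9 9 9 (R0 + 3 * R1 + 3 * R2) al be ga" using alg n by simp
  show ?thesis using alg' rank_le[OF alg'] unfolding R0_def R1_def R2_def by blast
qed

end
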